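(* With the conventions $H^{(t)}_0(x)=1$ and $H^{(t)}_m(x)=0$ for $m<0$, for all $n\ge0$, \[ H^{(t)}_{n+1}(x)=x\,H^{(t)}_n(x)-\binom{n}{t}\frac{(t+1)!}{2}\,H^{(t)}_{n-t}(x). \]
   Context: Fix an integer $t\ge1$. A $t$-path in the complete graph $K_n$ (vertices $1,\dots,n$) is a subgraph isomorphic to a path with $t$ edges (on a given set of $t+1$ vertices there are $(t+1)!/2$ of them). The Hermite polynomial of order $t$ is $H^{(t)}_n(x)=\sum_F(-1)^{|F|}x^{\,n-(t+1)|F|}$, the sum over all families $F$ of pairwise vertex-disjoint $t$-paths in $K_n$. *)

theory Defs
  imports "HOL-Computational_Algebra.Polynomial"
begin

text \<open>The complete graph K_n has vertex set {1..n}; an edge is a 2-element set of vertices.\<close>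

definition tpaths :: "nat \<Rightarrow> nat \<Rightarrow> nat set set set" where
  "tpaths t n = {E. \<exists>vs. length vs = t + 1 \<and> distinct vs \<and> set vs \<subseteq> {1..n}
                      \<and> E = {{vs ! i, vs ! (i + 1)} | i. i < t}}"

definition verts :: "nat set set \<Rightarrow> nat set" where
  "verts E = \<Union>E"

definition path_families :: "nat \<Rightarrow> nat \<Rightarrow> nat set set set set" where
  "path_families t n = {F. F \<subseteq> tpaths t n \<and>
      (\<forall>P\<in>F. \<forall>Q\<in>F. P \<noteq> Q \<longrightarrow> verts P \<inter> verts Q = {})}"

definition hermite :: "nat \<Rightarrow> nat \<Rightarrow> int poly" where
  "hermite t n = (\<Sum>F\<in>path_families t n. monom ((-1) ^ card F) (n - (t + 1) * card F))"

definition hermite_ext :: "nat \<Rightarrow> int \<Rightarrow> int poly" where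
  "hermite_ext t m = (if m < 0 then 0 else hermite t (nat m))"

end

theory Submission imports Defs "HOL-Combinatorics.Multiset_Permutations" begin

fun pe :: "'a list \<Rightarrow> 'a set set" where
  "pe (a # b # xs) = insert {a, b} (pe (b # xs))"
| "pe _ = {}"

lemma pe_Cons: "pe (x # xs) = (if xs = [] then {} else insert {x, hd xs} (pe xs))"
  by (cases xs) auto

lemma idx_Cons: "xs \<noteq> [] \<Longrightarrow> {{(x#xs) ! i, (x#xs) ! (i + 1)} | i. i + 1 < length (x#xs)}
   = insert {x, hd xs} {{xs ! i, xs ! (i + 1)} | i. i + 1 < length xs}"
proof (intro equalityI subsetI)
  fix e assume xs: "xs \<noteq> []" and "e \<in> {{(x#xs) ! i, (x#xs) ! (i + 1)} | i. i + 1 < length (x#xs)}"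
  then obtain i where i: "e = {(x#xs) ! i, (x#xs) ! (i + 1)}" "i + 1 < length (x#xs)" by blast
  show "e \<in> insert {x, hd xs} {{xs ! i, xs ! (i + 1)} | i. i + 1 < length xs}"
  proof (cases i)
    case 0 then show ?thesis using i xs by (simp add: hd_conv_nth)
  next
    case (Suc j) then show ?thesis using i by auto
  qed
next
  fix e assume xs: "xs \<noteq> []" and "e \<in> insert {x, hd xs} {{xs ! i, xs ! (i + 1)} | i. i + 1 < length xs}"
  then consider "e = {x, hd xs}" | j where "e = {xs ! j, xs ! (j + 1)}" "j + 1 < length xs" by blast
  then show "e \<in> {{(x#xs) ! i, (x#xs) ! (i + 1)} | i. i + 1 < length (x#xs)}"
  proof cases
    case 1 then show ?thesis using xs
      by (auto intro!: exI[of _ 0] simp: hd_conv_nth)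
  next
    case 2 then show ?thesis by (auto intro!: exI[of _ "Suc j"])
  qed
qed

lemma pe_idx: "pe vs = {{vs ! i, vs ! (i + 1)} | i. i + 1 < length vs}"
proof (induction vs)
  case (Cons x xs)
  show ?case
  proof (cases "xs = []")
    case True then show ?thesis by simp
  next
    case False then show ?thesis using Cons by (subst idx_Cons) (simp_all add: pe_Cons)
  qed
qed simp

lemma pe_append: "pe (xs @ ys) = pe xs \<union> pe ys \<union> (if xs \<noteq> [] \<and> ys \<noteq> [] then {{last xs, hd ys}} else {})"
  by (induction xs) (auto simp: pe_Cons)

lemma pe_rev: "pe (rev xs) = pe xs"
proof (induction xs)
  case (Cons x xs)
  have "pe (rev (x # xs)) = pe (rev xs @ [x])" by simp
  also have "\<dots> = pe xs \<union> (if xs \<noteq> [] then {{hd xs, x}} else {})"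
    using Cons by (simp add: pe_append last_rev)
  finally show ?case by (auto simp: pe_Cons insert_commute)
qed simp

lemma pe_sub: "e \<in> pe vs \<Longrightarrow> e \<subseteq> set vs"
  by (induction vs) (auto simp: pe_Cons split: if_splits)

lemma verts_pe: "length vs \<ge> 2 \<Longrightarrow> \<Union>(pe vs) = set vs"
proof (induction vs)
  case (Cons x xs)
  show ?case
  proof (cases "length xs \<ge> 2")
    case True then show ?thesis using Cons by (auto simp: pe_Cons)
  next
    case False
    with Cons.prems obtain y where "xs = [y]" by (cases xs rule: pe.cases) auto
    then show ?thesis by simp
  qed
qed simp

lemma pe_hd_edge: "distinct (a#b#r) \<Longrightarrow> e \<in> pe (a#b#r) \<Longrightarrow> a \<in> e \<Longrightarrow> e = {a,b}"
  using pe_sub[of e "b#r"] by auto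

lemma pe_notin: "distinct (a#b#r) \<Longrightarrow> {a,b} \<notin> pe (b#r)"
  using pe_sub[of "{a,b}" "b#r"] by auto


lemma tailA: "distinct (a#rest) \<Longrightarrow> length (a#rest) \<ge> 2 \<Longrightarrow> pe ws = pe (a#rest) \<Longrightarrow> a \<in> set ws"
proof -
  assume "distinct (a#rest)" "length (a#rest) \<ge> 2" "pe ws = pe (a#rest)"
  then have "a \<in> \<Union>(pe ws)" using verts_pe[of "a#rest"] by simp
  then show ?thesis using pe_sub by blast
qed

lemma tailB: assumes dv: "distinct (a#b#r)" and dw: "distinct ws" and pw: "pe ws = pe (a#b#r)"
  and ws: "ws = xs @ a # ys" shows "xs = [] \<or> ys = []"
proof (rule ccontr)
  assume "\<not> (xs = [] \<or> ys = [])"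
  then have ne: "xs \<noteq> []" "ys \<noteq> []" by auto
  have e1: "{last xs, a} \<in> pe ws" using ws ne by (simp add: pe_append)
  have e2: "{a, hd ys} \<in> pe ws" using ws ne by (simp add: pe_append pe_Cons)
  have e1': "{last xs, a} \<in> pe (a#b#r)" using e1 pw by (simp only:)
  have e2': "{a, hd ys} \<in> pe (a#b#r)" using e2 pw by (simp only:)
  have "{last xs, a} = {a,b}" by (rule pe_hd_edge[OF dv e1']) simp
  moreover have "{a, hd ys} = {a,b}" by (rule pe_hd_edge[OF dv e2']) simp
  moreover have "a \<noteq> b" using dv by simp
  ultimately have "last xs = hd ys" by (metis doubleton_eq_iff)
  moreover have "last xs \<noteq> hd ys"
  proof -
    have "last xs \<in> set xs" using ne by simp
    moreover have "hd ys \<in> set ys" using ne by simp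
    moreover have "set xs \<inter> set ys = {}" using dw ws by auto
    ultimately show ?thesis by (metis IntI empty_iff)
  qed
  ultimately show False by blast
qed

lemma keyL:
  assumes dv: "distinct (a#b#r)" and w1: "distinct ws'" "length ws' = length (a#b#r)" "pe ws' = pe (a#b#r)"
     "hd ws' = a"
     and IH: "\<And>ws. distinct ws \<Longrightarrow> length (b#r) \<ge> 2 \<Longrightarrow> length ws = length (b#r) \<Longrightarrow> pe ws = pe (b#r)
        \<Longrightarrow> ws = b#r \<or> ws = rev (b#r)"
  shows "ws' = a # b # r"
proof -
  obtain zs where zs: "ws' = a # zs" using w1 by (cases ws') auto
  then obtain c zs' where zs': "zs = c # zs'" using w1 by (cases zs) auto
  have "{a,c} \<in> pe (a#b#r)" using w1(3) zs zs' by (metis insertI1 pe.simps(1))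
  then have "{a,c} = {a,b}" by (rule pe_hd_edge[OF dv]) simp
  then have cb: "c = b" using dv by (metis doubleton_eq_iff)
  have dw: "distinct (a#b#zs')" using w1 zs zs' cb by simp
  have "insert {a,b} (pe (b#zs')) = insert {a,b} (pe (b#r))" using w1(3) zs zs' cb by simp
  then have pe_eq: "pe (b#zs') = pe (b#r)"
    using pe_notin[OF dv] pe_notin[OF dw] by (meson insert_ident)
  show ?thesis
  proof (cases "r = []")
    case True then show ?thesis using w1 zs zs' cb by simp
  next
    case False
    have len: "length (b#r) \<ge> 2" using False by (cases r) auto
    have "length (b#zs') = length (b#r)" using w1(2) zs zs' by simp
    then have disj: "b#zs' = b#r \<or> b#zs' = rev (b#r)"
      using IH[OF _ len _ pe_eq] dw by simp
    have hr: "hd (rev (b#r)) = last r" using False by (simp add: hd_rev)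
    have lr: "last r \<in> set r" using False by simp
    have br: "b \<notin> set r" using dv by simp
    have "b#zs' \<noteq> rev (b#r)"
    proof
      assume h: "b#zs' = rev (b#r)"
      have "hd (b#zs') = hd (rev (b#r))" by (simp only: h)
      then have "b = last r" using hr by simp
      then show False using lr br by simp
    qed
    then have "b#zs' = b#r" using disj by (metis (no_types))
    then show ?thesis using zs zs' cb by simp
  qed
qed

lemma pe_unique:
  "distinct vs \<Longrightarrow> distinct ws \<Longrightarrow> length vs \<ge> 2 \<Longrightarrow> length ws = length vs \<Longrightarrow> pe ws = pe vs
   \<Longrightarrow> ws = vs \<or> ws = rev vs"
proof (induction vs arbitrary: ws)
  case Nil then show ?case by simp
next
  case (Cons a rest)
  then obtain b r where rest: "rest = b # r" by (cases rest) auto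
  have dv: "distinct (a#b#r)" using Cons.prems rest by simp
  have IH: "\<And>ws. distinct ws \<Longrightarrow> length (b#r) \<ge> 2 \<Longrightarrow> length ws = length (b#r) \<Longrightarrow> pe ws = pe (b#r)
        \<Longrightarrow> ws = b#r \<or> ws = rev (b#r)"
    using Cons.IH Cons.prems(1) rest by simp
  have pw: "pe ws = pe (a#b#r)" using Cons.prems(5) rest by simp
  have lw: "length ws = length (a#b#r)" using Cons.prems(4) rest by simp
  have "a \<in> set ws" using tailA[OF _ _ Cons.prems(5)] Cons.prems(1,3) by simp
  then obtain xs ys where ws: "ws = xs @ a # ys" using split_list by metis
  have "xs = [] \<or> ys = []" by (rule tailB[OF dv Cons.prems(2) pw ws])
  then show ?case
  proof
    assume "xs = []"
    then have "hd ws = a" using ws by simp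
    then have "ws = a # b # r" by (rule keyL[OF dv Cons.prems(2) lw pw _ IH])
    then show ?thesis using rest by simp
  next
    assume "ys = []"
    then have "hd (rev ws) = a" using ws by simp
    moreover have "distinct (rev ws)" "length (rev ws) = length (a#b#r)" "pe (rev ws) = pe (a#b#r)"
      using Cons.prems(2) lw pw by (simp_all add: pe_rev)
    ultimately have "rev ws = a # b # r" by (intro keyL[OF dv _ _ _ _ IH])
    then show ?thesis using rest by (metis rev_rev_ident)
  qed
qed


lemma hd_neq_last: "distinct vs \<Longrightarrow> length vs \<ge> 2 \<Longrightarrow> vs \<noteq> rev vs"
proof
  assume d: "distinct vs" and l: "length vs \<ge> 2" and e: "vs = rev vs"
  obtain x y zs where vs: "vs = x # y # zs" using l by (cases vs rule: pe.cases) auto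
  have "hd vs = last vs" using e hd_rev by metis
  then have "x = last (y # zs)" using vs by simp
  moreover have "last (y # zs) \<in> set (y # zs)" by (rule last_in_set) simp
  ultimately show False using d vs by simp
qed

lemma fiber:
  assumes U: "finite U" "card U \<ge> 2" and vs: "vs \<in> permutations_of_set U"
  shows "{ws \<in> permutations_of_set U. pe ws = pe vs} = {vs, rev vs}"
proof (intro equalityI subsetI)
  fix ws assume "ws \<in> {ws \<in> permutations_of_set U. pe ws = pe vs}"
  then have w: "distinct ws" "set ws = U" "pe ws = pe vs" by (auto simp: permutations_of_set_def)
  have v: "distinct vs" "set vs = U" using vs by (auto simp: permutations_of_set_def)
  have "length vs = card U" using v distinct_card by metis
  moreover have "length ws = card U" using w distinct_card by metis
  ultimately have "ws = vs \<or> ws = rev vs" using pe_unique[of vs ws] v w U by simp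
  then show "ws \<in> {vs, rev vs}" by simp
next
  fix ws assume "ws \<in> {vs, rev vs}"
  then show "ws \<in> {ws \<in> permutations_of_set U. pe ws = pe vs}"
    using vs by (auto simp: permutations_of_set_def pe_rev)
qed

lemma count_paths:
  assumes U: "finite U" "card U \<ge> 2"
  shows "card (pe ` permutations_of_set U) = fact (card U) div 2"
proof -
  let ?L = "permutations_of_set U"
  have fin: "finite ?L" by simp
  have eq: "?L = (\<Union>E\<in>pe ` ?L. {ws \<in> ?L. pe ws = E})" by auto
  have c2: "card {ws \<in> ?L. pe ws = E} = 2" if "E \<in> pe ` ?L" for E
  proof -
    obtain vs where vs: "vs \<in> ?L" "E = pe vs" using \<open>E \<in> pe ` ?L\<close> by blast
    have "distinct vs" "length vs = card U" using vs(1) distinct_card[of vs]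
      by (auto simp: permutations_of_set_def)
    then have "vs \<noteq> rev vs" using hd_neq_last U by metis
    then show ?thesis using fiber[OF U vs(1)] vs(2) by simp
  qed
  have "card ?L = (\<Sum>E\<in>pe ` ?L. card {ws \<in> ?L. pe ws = E})"
    by (subst eq, rule card_UN_disjoint) (use fin in auto)
  also have "\<dots> = (\<Sum>E\<in>pe ` ?L. 2)" using c2 by simp
  also have "\<dots> = 2 * card (pe ` ?L)" by simp
  finally show ?thesis using U by simp
qed


definition tp :: "nat \<Rightarrow> nat set \<Rightarrow> nat set set set" where
  "tp t V = {pe vs | vs. length vs = t + 1 \<and> distinct vs \<and> set vs \<subseteq> V}"

definition pf :: "nat \<Rightarrow> nat set \<Rightarrow> nat set set set set" where
  "pf t V = {F. F \<subseteq> tp t V \<and> (\<forall>P\<in>F. \<forall>Q\<in>F. P \<noteq> Q \<longrightarrow> verts P \<inter> verts Q = {})}"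

definition G :: "nat \<Rightarrow> nat set \<Rightarrow> int poly" where
  "G t V = (\<Sum>F\<in>pf t V. monom ((-1) ^ card F) (card V - (t + 1) * card F))"

lemma pe_idx_t: "length vs = t + 1 \<Longrightarrow> {{vs ! i, vs ! (i + 1)} | i. i < t} = pe vs"
  by (simp add: pe_idx)

lemma tpaths_eq: "tpaths t n = tp t {1..n}"
proof (intro equalityI subsetI)
  fix E assume "E \<in> tpaths t n"
  then obtain vs where vs: "length vs = t + 1" "distinct vs" "set vs \<subseteq> {1..n}"
    "E = {{vs ! i, vs ! (i + 1)} | i. i < t}" unfolding tpaths_def by blast
  then have "E = pe vs" by (simp only: vs(4) pe_idx_t[OF vs(1)])
  then show "E \<in> tp t {1..n}" using vs unfolding tp_def by blast
next
  fix E assume "E \<in> tp t {1..n}"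
  then obtain vs where vs: "length vs = t + 1" "distinct vs" "set vs \<subseteq> {1..n}"
    "E = pe vs" unfolding tp_def by blast
  then have "E = {{vs ! i, vs ! (i + 1)} | i. i < t}" by (simp only: vs(4) pe_idx_t[OF vs(1)])
  then show "E \<in> tpaths t n" using vs unfolding tpaths_def by blast
qed

lemma hermite_eq: "hermite t n = G t {1..n}"
  unfolding hermite_def G_def path_families_def pf_def tpaths_eq by simp

lemma tp_elim:
  assumes "t \<ge> 1" "P \<in> tp t V"
  obtains vs where "P = pe vs" "length vs = t + 1" "distinct vs" "set vs \<subseteq> V" "verts P = set vs"
proof -
  obtain vs where vs: "P = pe vs" "length vs = t + 1" "distinct vs" "set vs \<subseteq> V"
    using assms(2) unfolding tp_def by blast
  have "verts P = set vs" unfolding verts_def using vs(1,2) assms(1) verts_pe[of vs] by simp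
  then show ?thesis using that vs by blast
qed

lemma tp_verts_sub: "t \<ge> 1 \<Longrightarrow> P \<in> tp t V \<Longrightarrow> verts P \<subseteq> V"
  by (erule tp_elim) auto

lemma tp_card_verts: "t \<ge> 1 \<Longrightarrow> P \<in> tp t V \<Longrightarrow> card (verts P) = t + 1"
  by (erule tp_elim) (auto simp: distinct_card)

lemma tp_finite_verts: "t \<ge> 1 \<Longrightarrow> P \<in> tp t V \<Longrightarrow> finite (verts P)"
  by (erule tp_elim) auto

lemma tp_restrict: "t \<ge> 1 \<Longrightarrow> P \<in> tp t V \<Longrightarrow> verts P \<subseteq> W \<Longrightarrow> P \<in> tp t W"
  by (erule tp_elim) (auto simp: tp_def)

lemma tp_mono: "V \<subseteq> W \<Longrightarrow> tp t V \<subseteq> tp t W"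
  unfolding tp_def by blast

lemma finite_tp: "finite V \<Longrightarrow> finite (tp t V)"
proof -
  assume V: "finite V"
  have "tp t V \<subseteq> pe ` {vs. set vs \<subseteq> V \<and> length vs = t + 1}" unfolding tp_def by blast
  moreover have "finite (pe ` {vs. set vs \<subseteq> V \<and> length vs = t + 1})"
    using finite_lists_length_eq[OF V] by blast
  ultimately show ?thesis by (rule finite_subset)
qed

lemma finite_pf: "finite V \<Longrightarrow> finite (pf t V)"
proof -
  assume V: "finite V"
  have "pf t V \<subseteq> Pow (tp t V)" unfolding pf_def by blast
  then show ?thesis using finite_tp[OF V] by (meson finite_Pow_iff finite_subset)
qed

lemma pf_finite_F: "finite V \<Longrightarrow> F \<in> pf t V \<Longrightarrow> finite F"
proof -
  assume V: "finite V" and F: "F \<in> pf t V"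
  have "F \<subseteq> tp t V" using F unfolding pf_def by simp
  then show ?thesis using finite_tp[OF V] by (rule finite_subset)
qed

lemma pf_bound:
  assumes t: "t \<ge> 1" and V: "finite V" and F: "F \<in> pf t V"
  shows "(t + 1) * card F \<le> card V"
proof -
  have Fs: "F \<subseteq> tp t V" and dis: "\<forall>P\<in>F. \<forall>Q\<in>F. P \<noteq> Q \<longrightarrow> verts P \<inter> verts Q = {}"
    using F unfolding pf_def by auto
  have fF: "finite F" using pf_finite_F[OF V F] .
  have "card (\<Union>P\<in>F. verts P) = (\<Sum>P\<in>F. card (verts P))"
    by (rule card_UN_disjoint) (use fF Fs dis tp_finite_verts[OF t] in auto)
  also have "\<dots> = (\<Sum>P\<in>F. t + 1)"
    by (rule sum.cong) (use Fs tp_card_verts[OF t] in auto)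
  also have "\<dots> = (t + 1) * card F" by simp
  finally have "card (\<Union>P\<in>F. verts P) = (t + 1) * card F" .
  moreover have "(\<Union>P\<in>F. verts P) \<subseteq> V" using Fs tp_verts_sub[OF t] by blast
  ultimately show ?thesis using card_mono[OF V] by metis
qed

lemma tp_vertset:
  assumes t: "t \<ge> 1" and U: "U \<subseteq> V" "card U = t + 1" "finite U"
  shows "{P \<in> tp t V. verts P = U} = pe ` permutations_of_set U"
proof (intro equalityI subsetI)
  fix P assume "P \<in> {P \<in> tp t V. verts P = U}"
  then have P: "P \<in> tp t V" "verts P = U" by auto
  obtain vs where "P = pe vs" "distinct vs" "verts P = set vs" using tp_elim[OF t P(1)] by metis
  then show "P \<in> pe ` permutations_of_set U" using P(2) by (auto simp: permutations_of_set_def)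
next
  fix P assume "P \<in> pe ` permutations_of_set U"
  then obtain vs where vs: "P = pe vs" "distinct vs" "set vs = U"
    by (auto simp: permutations_of_set_def)
  have l: "length vs = t + 1" using vs U distinct_card by metis
  have "P \<in> tp t V" unfolding tp_def using vs l U by blast
  moreover have "verts P = U" unfolding verts_def using vs l t verts_pe[of vs] by simp
  ultimately show "P \<in> {P \<in> tp t V. verts P = U}" by simp
qed

lemma card_Pa:
  assumes t: "t \<ge> 1" and V: "finite V" and a: "a \<notin> V"
  shows "card {P \<in> tp t (insert a V). a \<in> verts P} = (card V choose t) * (fact (t + 1) div 2)"
proof -
  let ?S = "{S. S \<subseteq> V \<and> card S = t}"
  let ?A = "\<lambda>S. {P \<in> tp t (insert a V). verts P = insert a S}"
  have eq: "{P \<in> tp t (insert a V). a \<in> verts P} = (\<Union>S\<in>?S. ?A S)"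
  proof (intro equalityI subsetI)
    fix P assume "P \<in> {P \<in> tp t (insert a V). a \<in> verts P}"
    then have P: "P \<in> tp t (insert a V)" "a \<in> verts P" by auto
    let ?T = "verts P - {a}"
    have "?T \<subseteq> V" using tp_verts_sub[OF t P(1)] by blast
    moreover have "card ?T = t" using tp_card_verts[OF t P(1)] P(2) tp_finite_verts[OF t P(1)] by simp
    moreover have "verts P = insert a ?T" using P(2) by blast
    ultimately show "P \<in> (\<Union>S\<in>?S. ?A S)" using P(1) by blast
  qed auto
  have fS: "finite ?S" using V by simp
  have cA: "card (?A S) = fact (t + 1) div 2" if "S \<in> ?S" for S
  proof -
    have S: "S \<subseteq> V" "card S = t" using that by auto
    have fS: "finite S" using S V finite_subset by blast
    have aS: "a \<notin> S" using S a by blast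
    have cU: "card (insert a S) = t + 1" using S fS aS by simp
    have "?A S = pe ` permutations_of_set (insert a S)"
      by (rule tp_vertset[OF t]) (use S cU fS in auto)
    then show ?thesis using count_paths[of "insert a S"] cU fS t by simp
  qed
  have "card (\<Union>S\<in>?S. ?A S) = (\<Sum>S\<in>?S. card (?A S))"
  proof (rule card_UN_disjoint[OF fS])
    show "\<forall>S\<in>?S. finite (?A S)" using finite_tp[of "insert a V" t] V by auto
    show "\<forall>S\<in>?S. \<forall>S'\<in>?S. S \<noteq> S' \<longrightarrow> ?A S \<inter> ?A S' = {}"
    proof (intro ballI impI)
      fix S S' assume "S \<in> ?S" "S' \<in> ?S" "S \<noteq> S'"
      moreover have "a \<notin> S" "a \<notin> S'" using \<open>S \<in> ?S\<close> \<open>S' \<in> ?S\<close> a by auto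
      ultimately have "insert a S \<noteq> insert a S'" using insert_ident by metis
      then show "?A S \<inter> ?A S' = {}" by blast
    qed
  qed
  also have "\<dots> = (\<Sum>S\<in>?S. fact (t + 1) div 2)" using cA by simp
  also have "\<dots> = (card V choose t) * (fact (t + 1) div 2)" using n_subsets[OF V] by simp
  finally show ?thesis using eq by simp
qed


lemma pe_map: "pe (map f vs) = image (image f) (pe vs)"
  by (induction vs) (auto simp: pe_Cons hd_map)

lemma verts_mE: "verts (image (image f) E) = f ` verts E"
  unfolding verts_def by auto

lemma mE_cancel:
  assumes "\<And>x. x \<in> verts P \<Longrightarrow> f (g x) = x"
  shows "image (image f) (image (image g) P) = P"
proof -
  have "image f (image g e) = e" if "e \<in> P" for e
  proof -
    have "image f (image g e) = (\<lambda>x. f (g x)) ` e" by (simp add: image_image)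
    also have "\<dots> = id ` e"
      by (rule image_cong) (use assms that in \<open>auto simp: verts_def\<close>)
    finally show ?thesis by simp
  qed
  then show ?thesis by (simp add: image_image)
qed

lemma tp_map:
  assumes t: "t \<ge> 1" and f: "inj_on f V" "f ` V \<subseteq> W" and P: "P \<in> tp t V"
  shows "image (image f) P \<in> tp t W"
proof -
  obtain vs where vs: "P = pe vs" "length vs = t + 1" "distinct vs" "set vs \<subseteq> V"
    using tp_elim[OF t P] by metis
  have "distinct (map f vs)" using vs f inj_on_subset distinct_map by metis
  moreover have "set (map f vs) \<subseteq> W" using vs f by auto
  moreover have "image (image f) P = pe (map f vs)" using vs by (simp add: pe_map)
  ultimately have "pe (map f vs) \<in> tp t W" unfolding tp_def
    by (intro CollectI exI[of _ "map f vs"]) (use vs in simp)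
  then show ?thesis using \<open>image (image f) P = pe (map f vs)\<close> by simp
qed

lemma pf_map:
  assumes t: "t \<ge> 1" and f: "inj_on f V" "f ` V \<subseteq> W" and F: "F \<in> pf t V"
  shows "image (image (image f)) F \<in> pf t W"
proof -
  have Fs: "F \<subseteq> tp t V" and dis: "\<forall>P\<in>F. \<forall>Q\<in>F. P \<noteq> Q \<longrightarrow> verts P \<inter> verts Q = {}"
    using F unfolding pf_def by auto
  have "image (image (image f)) F \<subseteq> tp t W" using Fs tp_map[OF t f] by blast
  moreover have "verts P' \<inter> verts Q' = {}"
    if h: "P' \<in> image (image (image f)) F" "Q' \<in> image (image (image f)) F" "P' \<noteq> Q'" for P' Q'
  proof -
    obtain P where P: "P \<in> F" "P' = image (image f) P" using h(1) by blast
    obtain Q where Q: "Q \<in> F" "Q' = image (image f) Q" using h(2) by blast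
    note PQ = P(1) Q(1) P(2) Q(2)
    then have "P \<noteq> Q" using h(3) by blast
    then have "verts P \<inter> verts Q = {}" using dis PQ by blast
    moreover have "verts P \<subseteq> V" "verts Q \<subseteq> V" using PQ Fs tp_verts_sub[OF t] by blast+
    ultimately have "f ` verts P \<inter> f ` verts Q = {}" using f(1)
      by (metis image_empty inj_on_image_Int)
    then show ?thesis using PQ by (simp add: verts_mE)
  qed
  ultimately show ?thesis unfolding pf_def by blast
qed

lemma G_bij:
  assumes t: "t \<ge> 1" and f: "bij_betw f V W"
  shows "G t V = G t W"
proof -
  let ?g = "inv_into V f"
  have g: "bij_betw ?g W V" using f by (rule bij_betw_inv_into)
  have fi: "inj_on f V" "f ` V \<subseteq> W" using f by (auto simp: bij_betw_def)
  have gi: "inj_on ?g W" "?g ` W \<subseteq> V" using g by (auto simp: bij_betw_def)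
  let ?h = "image (image (image f))" and ?h' = "image (image (image ?g))"
  have canc1: "image (image ?g) (image (image f) P) = P" if "P \<in> tp t V" for P
  proof (rule mE_cancel)
    fix x assume "x \<in> verts P"
    then have "x \<in> V" using tp_verts_sub[OF t that] by blast
    then show "?g (f x) = x" using fi(1) by simp
  qed
  have canc2: "image (image f) (image (image ?g) P) = P" if "P \<in> tp t W" for P
  proof (rule mE_cancel)
    fix x assume "x \<in> verts P"
    then have "x \<in> W" using tp_verts_sub[OF t that] by blast
    then show "f (?g x) = x" using f by (simp add: bij_betw_def f_inv_into_f)
  qed
  have bij: "bij_betw ?h (pf t V) (pf t W)"
  proof (rule bij_betw_byWitness[where f' = ?h'])
    show "\<forall>F\<in>pf t V. ?h' (?h F) = F"
    proof
      fix F assume "F \<in> pf t V"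
      then have "F \<subseteq> tp t V" unfolding pf_def by simp
      then show "?h' (?h F) = F" using canc1 by (simp add: image_image subset_iff)
    qed
    show "\<forall>F\<in>pf t W. ?h (?h' F) = F"
    proof
      fix F assume "F \<in> pf t W"
      then have "F \<subseteq> tp t W" unfolding pf_def by simp
      then show "?h (?h' F) = F" using canc2 by (simp add: image_image subset_iff)
    qed
    show "?h ` pf t V \<subseteq> pf t W" using pf_map[OF t fi] by blast
    show "?h' ` pf t W \<subseteq> pf t V" using pf_map[OF t gi] by blast
  qed
  have cardF: "card (?h F) = card F" if "F \<in> pf t V" for F
  proof -
    have "F \<subseteq> tp t V" using that unfolding pf_def by simp
    then have "inj_on (image (image f)) F" using canc1 by (metis inj_on_inverseI subsetD)
    then show ?thesis by (rule card_image)
  qed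
  have cVW: "card W = card V" using f bij_betw_same_card by metis
  have "G t W = (\<Sum>F\<in>pf t W. monom ((-1) ^ card F) (card W - (t + 1) * card F))"
    unfolding G_def ..
  also have "\<dots> = (\<Sum>F\<in>pf t V. monom ((-1) ^ card (?h F)) (card W - (t + 1) * card (?h F)))"
    by (rule sum.reindex_bij_betw[OF bij, symmetric])
  also have "\<dots> = (\<Sum>F\<in>pf t V. monom ((-1) ^ card F) (card V - (t + 1) * card F))"
    by (rule sum.cong) (simp_all add: cardF cVW)
  finally show ?thesis unfolding G_def by simp
qed

lemma G_hermite:
  assumes t: "t \<ge> 1" and V: "finite V"
  shows "G t V = hermite t (card V)"
proof -
  obtain f where "bij_betw f V {1..card V}" using finite_same_card_bij[OF V, of "{1..card V}"] by auto
  then have "G t V = G t {1..card V}" by (rule G_bij[OF t])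
  then show ?thesis by (simp add: hermite_eq)
qed


lemma pf_verts: "t \<ge> 1 \<Longrightarrow> F \<in> pf t W \<Longrightarrow> Q \<in> F \<Longrightarrow> verts Q \<subseteq> W"
proof -
  assume t: "t \<ge> 1" and "F \<in> pf t W" "Q \<in> F"
  then have "Q \<in> tp t W" unfolding pf_def by blast
  then show ?thesis by (rule tp_verts_sub[OF t])
qed

lemma xmonom: "[:0, 1:] * monom (c::int) m = monom c (Suc m)"
  by (simp add: monom_Suc)

lemma part_A:
  assumes t: "t \<ge> 1" and a: "a \<notin> V"
  shows "{F \<in> pf t (insert a V). \<forall>P\<in>F. a \<notin> verts P} = pf t V"
proof (intro equalityI subsetI)
  fix F assume F: "F \<in> {F \<in> pf t (insert a V). \<forall>P\<in>F. a \<notin> verts P}"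
  have "P \<in> tp t V" if "P \<in> F" for P
  proof -
    have P: "P \<in> tp t (insert a V)" "a \<notin> verts P" using F that unfolding pf_def by auto
    have "verts P \<subseteq> V" using tp_verts_sub[OF t P(1)] P(2) by blast
    then show ?thesis using tp_restrict[OF t P(1)] by blast
  qed
  then show "F \<in> pf t V" using F unfolding pf_def by blast
next
  fix F assume F: "F \<in> pf t V"
  have "F \<subseteq> tp t (insert a V)" using F tp_mono[of V "insert a V" t] unfolding pf_def by blast
  moreover have "\<forall>P\<in>F. a \<notin> verts P" using pf_verts[OF t F] a by blast
  ultimately show "F \<in> {F \<in> pf t (insert a V). \<forall>P\<in>F. a \<notin> verts P}" using F unfolding pf_def by blast
qed

lemma part_B:
  assumes t: "t \<ge> 1" and a: "a \<notin> V"
  shows "{F \<in> pf t (insert a V). \<exists>P\<in>F. a \<in> verts P}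
     = (\<Union>P\<in>{P \<in> tp t (insert a V). a \<in> verts P}. insert P ` pf t (V - verts P))"
proof (intro equalityI subsetI)
  fix F assume F: "F \<in> {F \<in> pf t (insert a V). \<exists>P\<in>F. a \<in> verts P}"
  then obtain P where P: "P \<in> F" "a \<in> verts P" by blast
  have Fs: "F \<subseteq> tp t (insert a V)" and dis: "\<forall>P\<in>F. \<forall>Q\<in>F. P \<noteq> Q \<longrightarrow> verts P \<inter> verts Q = {}"
    using F unfolding pf_def by auto
  have "Q \<in> tp t (V - verts P)" if "Q \<in> F - {P}" for Q
  proof -
    have Q: "Q \<in> tp t (insert a V)" using that Fs by blast
    have "verts Q \<inter> verts P = {}" using dis that P by blast
    moreover have "verts Q \<subseteq> insert a V" using tp_verts_sub[OF t Q] .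
    ultimately have "verts Q \<subseteq> V - verts P" using P(2) by blast
    then show ?thesis using tp_restrict[OF t Q] by blast
  qed
  then have "F - {P} \<in> pf t (V - verts P)" using dis unfolding pf_def by blast
  moreover have "F = insert P (F - {P})" using P by blast
  moreover have "P \<in> {P \<in> tp t (insert a V). a \<in> verts P}" using P Fs by blast
  ultimately show "F \<in> (\<Union>P\<in>{P \<in> tp t (insert a V). a \<in> verts P}. insert P ` pf t (V - verts P))"
    by blast
next
  fix F assume "F \<in> (\<Union>P\<in>{P \<in> tp t (insert a V). a \<in> verts P}. insert P ` pf t (V - verts P))"
  then obtain P F1 where P: "P \<in> tp t (insert a V)" "a \<in> verts P" and F1: "F1 \<in> pf t (V - verts P)"
    and F: "F = insert P F1" by blast
  have F1s: "F1 \<subseteq> tp t (V - verts P)" and dis: "\<forall>P\<in>F1. \<forall>Q\<in>F1. P \<noteq> Q \<longrightarrow> verts P \<inter> verts Q = {}"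
    using F1 unfolding pf_def by auto
  have "F1 \<subseteq> tp t (insert a V)" using F1s tp_mono[of "V - verts P" "insert a V" t] by blast
  then have "F \<subseteq> tp t (insert a V)" using F P by blast
  moreover have "\<forall>R\<in>F. \<forall>Q\<in>F. R \<noteq> Q \<longrightarrow> verts R \<inter> verts Q = {}"
  proof (intro ballI impI)
    fix R Q assume RQ: "R \<in> F" "Q \<in> F" "R \<noteq> Q"
    show "verts R \<inter> verts Q = {}"
    proof (cases "R = P")
      case True
      then have "Q \<in> F1" using RQ F by blast
      then show ?thesis using pf_verts[OF t F1] True by blast
    next
      case False
      then have R1: "R \<in> F1" using RQ F by blast
      show ?thesis
      proof (cases "Q = P")
        case True then show ?thesis using pf_verts[OF t F1 R1] by blast
      next
        case False then have "Q \<in> F1" using RQ F by blast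
        then show ?thesis using dis R1 RQ(3) by blast
      qed
    qed
  qed
  ultimately have "F \<in> pf t (insert a V)" unfolding pf_def by blast
  then show "F \<in> {F \<in> pf t (insert a V). \<exists>P\<in>F. a \<in> verts P}" using F P by blast
qed

lemma card_V_minus:
  assumes t: "t \<ge> 1" and V: "finite V" and a: "a \<notin> V"
    and P: "P \<in> tp t (insert a V)" "a \<in> verts P"
  shows "card (V - verts P) = card V - t"
proof -
  have fP: "finite (verts P)" using tp_finite_verts[OF t P(1)] .
  have "V \<inter> verts P = verts P - {a}" using tp_verts_sub[OF t P(1)] a by blast
  then have "card (V \<inter> verts P) = t" using tp_card_verts[OF t P(1)] P(2) fP by simp
  moreover have "card (V - verts P) = card V - card (V \<inter> verts P)"
    by (rule card_Diff_subset_Int) (use V in simp)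
  ultimately show ?thesis by simp
qed


lemma arith_aux: "Suc n - (t + 1) * Suc c = n - t - (t + 1) * (c::nat)"
proof -
  define k where "k = (t + 1) * c"
  have "(t + 1) * Suc c = t + 1 + k" unfolding k_def by simp
  moreover have "Suc n - (t + 1 + k) = n - t - k" by arith
  ultimately show ?thesis unfolding k_def by simp
qed

lemma inner_sum:
  assumes t: "t \<ge> 1" and V: "finite V" and a: "a \<notin> V"
    and P: "P \<in> tp t (insert a V)" "a \<in> verts P"
  shows "(\<Sum>F\<in>insert P ` pf t (V - verts P). monom ((-1::int) ^ card F) (Suc (card V) - (t + 1) * card F))
         = - hermite t (card V - t)"
proof -
  let ?W = "V - verts P"
  have W: "finite ?W" using V by simp
  have notin: "P \<notin> F1" if "F1 \<in> pf t ?W" for F1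
  proof
    assume "P \<in> F1"
    then have "verts P \<subseteq> ?W" using pf_verts[OF t that] by blast
    then show False using P(2) a by blast
  qed
  have inj: "inj_on (insert P) (pf t ?W)"
  proof (rule inj_onI)
    fix F1 F2 assume "F1 \<in> pf t ?W" "F2 \<in> pf t ?W" "insert P F1 = insert P F2"
    then show "F1 = F2" using notin insert_ident by metis
  qed
  have "(\<Sum>F\<in>insert P ` pf t ?W. monom ((-1::int) ^ card F) (Suc (card V) - (t + 1) * card F))
     = (\<Sum>F1\<in>pf t ?W. monom ((-1::int) ^ card (insert P F1)) (Suc (card V) - (t + 1) * card (insert P F1)))"
    by (rule sum.reindex[OF inj, unfolded comp_def])
  also have "\<dots> = (\<Sum>F1\<in>pf t ?W. - monom ((-1::int) ^ card F1) (card ?W - (t + 1) * card F1))"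
  proof (rule sum.cong[OF refl])
    fix F1 assume F1: "F1 \<in> pf t ?W"
    have c: "card (insert P F1) = Suc (card F1)"
      using pf_finite_F[OF W F1] notin[OF F1] by simp
    have cw: "card ?W = card V - t" by (rule card_V_minus[OF t V a P])
    show "monom ((-1::int) ^ card (insert P F1)) (Suc (card V) - (t + 1) * card (insert P F1))
        = - monom ((-1::int) ^ card F1) (card ?W - (t + 1) * card F1)"
      unfolding c cw arith_aux by (simp add: minus_monom)
  qed
  also have "\<dots> = - G t ?W" unfolding G_def by (simp add: sum_negf)
  also have "\<dots> = - hermite t (card V - t)"
    using G_hermite[OF t W] card_V_minus[OF t V a P] by simp
  finally show ?thesis .
qed

lemma G_rec:
  assumes t: "t \<ge> 1" and V: "finite V" and a: "a \<notin> V"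
  shows "G t (insert a V) = [:0, 1:] * G t V
     - of_nat (card {P \<in> tp t (insert a V). a \<in> verts P}) * hermite t (card V - t)"
proof -
  let ?T = "\<lambda>F. monom ((-1::int) ^ card F) (Suc (card V) - (t + 1) * card F)"
  let ?A = "{F \<in> pf t (insert a V). \<forall>P\<in>F. a \<notin> verts P}"
  let ?B = "{F \<in> pf t (insert a V). \<exists>P\<in>F. a \<in> verts P}"
  let ?Pa = "{P \<in> tp t (insert a V). a \<in> verts P}"
  have cI: "card (insert a V) = Suc (card V)" using V a by simp
  have fV: "finite (insert a V)" using V by simp
  have split: "pf t (insert a V) = ?A \<union> ?B" by blast
  have finA: "finite ?A" using finite_pf[OF fV, of t] by simp
  have finB: "finite ?B" using finite_pf[OF fV, of t] by simp
  have "G t (insert a V) = sum ?T (?A \<union> ?B)" unfolding G_def cI split[symmetric] ..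
  also have "\<dots> = sum ?T ?A + sum ?T ?B" by (rule sum.union_disjoint[OF finA finB]) blast
  finally have G1: "G t (insert a V) = sum ?T ?A + sum ?T ?B" .
  have SA: "sum ?T ?A = [:0, 1:] * G t V"
  proof -
    have "sum ?T ?A = sum ?T (pf t V)" using part_A[OF t a] by simp
    also have "\<dots> = (\<Sum>F\<in>pf t V. [:0, 1:] * monom ((-1::int) ^ card F) (card V - (t + 1) * card F))"
    proof (rule sum.cong[OF refl])
      fix F assume F: "F \<in> pf t V"
      have "(t + 1) * card F \<le> card V" by (rule pf_bound[OF t V F])
      then have "Suc (card V) - (t + 1) * card F = Suc (card V - (t + 1) * card F)" by arith
      then show "?T F = [:0, 1:] * monom ((-1::int) ^ card F) (card V - (t + 1) * card F)"
        by (simp add: monom_Suc)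
    qed
    also have "\<dots> = [:0, 1:] * G t V" unfolding G_def by (simp add: sum_distrib_left)
    finally show ?thesis .
  qed
  have SB: "sum ?T ?B = - (of_nat (card ?Pa) * hermite t (card V - t))"
  proof -
    have finPa: "finite ?Pa" using finite_tp[OF fV, of t] by simp
    have "sum ?T ?B = sum ?T (\<Union>P\<in>?Pa. insert P ` pf t (V - verts P))" using part_B[OF t a] by simp
    also have "\<dots> = (\<Sum>P\<in>?Pa. sum ?T (insert P ` pf t (V - verts P)))"
    proof (rule sum.UNION_disjoint[OF finPa])
      show "\<forall>P\<in>?Pa. finite (insert P ` pf t (V - verts P))" using finite_pf V by simp
      show "\<forall>P\<in>?Pa. \<forall>Q\<in>?Pa. P \<noteq> Q \<longrightarrow> insert P ` pf t (V - verts P) \<inter> insert Q ` pf t (V - verts Q) = {}"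
      proof (intro ballI impI)
        fix P Q assume P: "P \<in> ?Pa" and Q: "Q \<in> ?Pa" and PQ: "P \<noteq> Q"
        show "insert P ` pf t (V - verts P) \<inter> insert Q ` pf t (V - verts Q) = {}"
        proof (rule ccontr)
          assume "insert P ` pf t (V - verts P) \<inter> insert Q ` pf t (V - verts Q) \<noteq> {}"
          then obtain F1 F2 where F1: "F1 \<in> pf t (V - verts P)" and F2: "F2 \<in> pf t (V - verts Q)"
            and e: "insert P F1 = insert Q F2" by blast
          then have "Q \<in> F1" using PQ by blast
          then have "verts Q \<subseteq> V - verts P" using pf_verts[OF t F1] by blast
          then show False using Q a by blast
        qed
      qed
    qed
    also have "\<dots> = (\<Sum>P\<in>?Pa. - hermite t (card V - t))"
      by (rule sum.cong[OF refl]) (use inner_sum[OF t V a] in blast)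
    also have "\<dots> = - (of_nat (card ?Pa) * hermite t (card V - t))" by simp
    finally show ?thesis .
  qed
  show ?thesis using G1 SA SB by simp
qed


theorem mainTheorem11:
  fixes t n :: nat
  assumes "t \<ge> 1"
  shows "hermite t (n + 1) =
           [:0, 1:] * hermite t n
           - smult (of_nat ((n choose t) * (fact (t + 1) div 2))) (hermite_ext t (int n - int t))"
proof -
  have t: "t \<ge> 1" using assms .
  have V: "finite {1..n}" by simp
  have a: "n + 1 \<notin> {1..n}" by simp
  have ins: "{1..n + 1} = insert (n + 1) {1..n}" by auto
  have "hermite t (n + 1) = G t (insert (n + 1) {1..n})" unfolding hermite_eq ins ..
  also have "\<dots> = [:0, 1:] * G t {1..n}
     - of_nat (card {P \<in> tp t (insert (n + 1) {1..n}). n + 1 \<in> verts P}) * hermite t (card {1..n} - t)"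
    by (rule G_rec[OF t V a])
  also have "\<dots> = [:0, 1:] * hermite t n
     - of_nat ((n choose t) * (fact (t + 1) div 2)) * hermite t (n - t)"
    unfolding card_Pa[OF t V a] hermite_eq[symmetric] by simp
  also have "\<dots> = [:0, 1:] * hermite t n
     - smult (of_nat ((n choose t) * (fact (t + 1) div 2))) (hermite_ext t (int n - int t))"
  proof (cases "n < t")
    case True
    then have c0: "n choose t = 0" by (simp add: binomial_eq_0)
    show ?thesis by (simp only: c0) simp
  next
    case False
    then have "hermite_ext t (int n - int t) = hermite t (n - t)"
      unfolding hermite_ext_def by (simp add: nat_diff_distrib)
    then show ?thesis by (simp add: of_nat_mult_conv_smult)
  qed
  finally show ?thesis .
qed

end
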